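(* Let $d\geq 2$ and $k\geq 0$ be integers and let $G$ be a graph of order $n\geq 2d+k$ whose girth satisfies $g(G)\geq 2d$. Then $\Delta_d^t(G)$ is $(k-1)$-connected.
   Context: All graphs are finite and simple; $\alpha(G)$ is the independence number and $G[S]$ the induced subgraph on $S$. $\Delta_d^t(G)=\{\sigma\subseteq V(G):\ \alpha(G[V(G)\setminus\sigma])\geq d\}$. The girth $g(G)$ is the minimum length of a cycle in $G$, and $\infty$ if $G$ has no cycles. A space is $m$-connected if it is nonempty and $\pi_i$ vanishes for all $0\le i\le m$ (for $m=-1$: nonempty). *)

theory Defs
  imports "HOL-Analysis.Analysis" "HOL-Library.Extended_Nat"
begin

definition simple_graph :: "('a \<Rightarrow> 'a \<Rightarrow> bool) \<Rightarrow> bool" where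
  "simple_graph E \<longleftrightarrow> (\<forall>u v. E u v \<longrightarrow> E v u) \<and> (\<forall>v. \<not> E v v)"

definition independent_set :: "('a \<Rightarrow> 'a \<Rightarrow> bool) \<Rightarrow> 'a set \<Rightarrow> bool" where
  "independent_set E I \<longleftrightarrow> (\<forall>u\<in>I. \<forall>v\<in>I. \<not> E u v)"

definition indep_num :: "('a \<Rightarrow> 'a \<Rightarrow> bool) \<Rightarrow> 'a set \<Rightarrow> nat" where
  "indep_num E S = Max {card I | I. I \<subseteq> S \<and> independent_set E I}"

definition has_cycle_of_length :: "('a \<Rightarrow> 'a \<Rightarrow> bool) \<Rightarrow> nat \<Rightarrow> bool" where
  "has_cycle_of_length E L \<longleftrightarrow> L \<ge> 3 \<and>
     (\<exists>c :: nat \<Rightarrow> 'a. inj_on c {..<L} \<and> (\<forall>i<L. E (c i) (c (Suc i mod L))))"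

text \<open>Girth: minimum cycle length, \<infinity> if acyclic (Inf {} = \<infinity> in enat).\<close>
definition girth :: "('a \<Rightarrow> 'a \<Rightarrow> bool) \<Rightarrow> enat" where
  "girth E = Inf {enat L | L. has_cycle_of_length E L}"

definition Delta_t :: "nat \<Rightarrow> ('a \<Rightarrow> 'a \<Rightarrow> bool) \<Rightarrow> 'a set set" where
  "Delta_t d E = {\<sigma>. indep_num E (UNIV - \<sigma>) \<ge> d}"

text \<open>Geometric realization of an abstract simplicial complex K on a finite
vertex type: points of the standard simplex in R^V whose support is a face of K,
with the subspace topology of the product (= Euclidean) topology.\<close>
definition geom_real :: "('a::finite) set set \<Rightarrow> ('a \<Rightarrow> real) topology" where
  "geom_real K = subtopology (powertop_real UNIV)
     {x. (\<forall>v. 0 \<le> x v) \<and> sum x UNIV = 1 \<and> {v. x v \<noteq> 0} \<in> K}"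

text \<open>m-connected (m \<ge> -1): nonempty, and \<pi>_i vanishes for 0 \<le> i \<le> m,
expressed as: every continuous map S^i \<rightarrow> X is homotopic to a constant map.\<close>
definition m_connected :: "int \<Rightarrow> 'b topology \<Rightarrow> bool" where
  "m_connected m X \<longleftrightarrow> topspace X \<noteq> {} \<and>
     (\<forall>i::nat. int i \<le> m \<longrightarrow>
        (\<forall>f. continuous_map (nsphere i) X f \<longrightarrow>
           (\<exists>c. homotopic_with (\<lambda>_. True) (nsphere i) X f (\<lambda>_. c))))"

end

theory Submission
  imports Defs
begin

definition downclosed :: "'a set set \<Rightarrow> bool" where
  "downclosed L \<longleftrightarrow> (\<forall>\<sigma> \<rho>. \<sigma> \<in> L \<longrightarrow> \<rho> \<subseteq> \<sigma> \<longrightarrow> \<rho> \<in> L)"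

lemma indep_finite: "finite {card I | I. I \<subseteq> (S::'a::finite set) \<and> independent_set E I}"
proof -
  have "{card I | I. I \<subseteq> S \<and> independent_set E I} \<subseteq> card ` Pow S" by auto
  then show ?thesis by (rule finite_subset) simp
qed

lemma indep_num_ge:
  fixes S :: "'a::finite set"
  assumes "I \<subseteq> S" "independent_set E I"
  shows "card I \<le> indep_num E S"
  unfolding indep_num_def using assms indep_finite[of S E]
  by (intro Max_ge) auto

lemma indep_num_mono:
  fixes S :: "'a::finite set"
  assumes "S \<subseteq> S'"
  shows "indep_num E S \<le> indep_num E S'"
  unfolding indep_num_def
proof (rule Max_mono)
  show "{card I |I. I \<subseteq> S \<and> independent_set E I} \<subseteq> {card I |I. I \<subseteq> S' \<and> independent_set E I}"
    using assms by blast
  show "{card I |I. I \<subseteq> S \<and> independent_set E I} \<noteq> {}"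
    unfolding independent_set_def by blast
qed (rule indep_finite)

lemma girth_le:
  assumes "has_cycle_of_length E L"
  shows "girth E \<le> enat L"
  unfolding girth_def using assms by (intro Inf_lower) auto

lemma cycle_from_degree2:
  fixes E :: "'a \<Rightarrow> 'a \<Rightarrow> bool"
  assumes sg: "simple_graph E" and fin: "finite W" and ne: "W \<noteq> {}"
    and deg: "\<And>v. v \<in> W \<Longrightarrow> \<exists>u\<in>W. \<exists>w\<in>W. u \<noteq> w \<and> E v u \<and> E v w"
  shows "\<exists>L. has_cycle_of_length E L \<and> L \<le> card W"
proof -
  obtain v0 where v0: "v0 \<in> W" using ne by blast
  obtain u0 where u0: "u0 \<in> W" "E v0 u0" using deg[OF v0] by blast
  define step where "step = (\<lambda>(p::'a, c::'a). (c, SOME x. x \<in> W \<and> E c x \<and> x \<noteq> p))"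
  define s where "s = (\<lambda>n. (step ^^ n) (u0, v0))"
  have inv: "fst (s n) \<in> W \<and> snd (s n) \<in> W \<and> E (fst (s n)) (snd (s n))" for n
  proof (induction n)
    case 0
    then show ?case using u0 v0 sg by (simp add: s_def simple_graph_def)
  next
    case (Suc n)
    obtain p c where pc: "s n = (p, c)" by fastforce
    have cW: "c \<in> W" using Suc pc by simp
    have ex: "\<exists>x. x \<in> W \<and> E c x \<and> x \<noteq> p"
      using deg[OF cW] by metis
    have "s (Suc n) = (c, SOME x. x \<in> W \<and> E c x \<and> x \<noteq> p)"
      using pc by (simp add: s_def step_def)
    then show ?case using someI_ex[OF ex] cW by simp
  qed
  have sSuc: "fst (s (Suc n)) = snd (s n)" for n
    by (cases "s n") (simp add: s_def step_def)
  have nb: "snd (s (Suc (Suc n))) \<noteq> snd (s n)" for n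
  proof -
    obtain p c where pc: "s (Suc n) = (p, c)" by fastforce
    have cW: "c \<in> W" using inv[of "Suc n"] pc by simp
    have ex: "\<exists>x. x \<in> W \<and> E c x \<and> x \<noteq> p"
      using deg[OF cW] by metis
    have "s (Suc (Suc n)) = (c, SOME x. x \<in> W \<and> E c x \<and> x \<noteq> p)"
      using pc by (simp add: s_def step_def)
    moreover have "p = snd (s n)" using sSuc[of n] pc by simp
    ultimately show ?thesis using someI_ex[OF ex] by simp
  qed
  define w where "w = (\<lambda>n. snd (s n))"
  have wW: "w n \<in> W" for n using inv[of n] by (simp add: w_def)
  have wE: "E (w n) (w (Suc n))" for n using inv[of "Suc n"] sSuc[of n] by (simp add: w_def)
  have wnb: "w (Suc (Suc n)) \<noteq> w n" for n using nb[of n] by (simp add: w_def)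
  have "\<not> inj_on w {..card W}"
  proof
    assume "inj_on w {..card W}"
    then have "card {..card W} \<le> card W"
      using card_inj_on_le[of w "{..card W}" W] wW fin by blast
    then show False by simp
  qed
  then obtain a b where ab: "a \<le> card W" "b \<le> card W" "a \<noteq> b" "w a = w b"
    unfolding inj_on_def by blast
  define P where "P = (\<lambda>b. \<exists>a<b. w a = w b)"
  have Pex: "\<exists>b\<le>card W. P b"
  proof (cases "a < b")
    case True then show ?thesis using ab unfolding P_def by blast
  next
    case False then have "b < a" using ab by simp
    then show ?thesis using ab unfolding P_def by metis
  qed
  define b0 where "b0 = (LEAST b. P b)"
  have Pb0: "P b0" unfolding b0_def using Pex by (metis LeastI)
  have b0le: "b0 \<le> card W" unfolding b0_def using Pex by (meson Least_le order_trans)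
  obtain a0 where a0: "a0 < b0" "w a0 = w b0" using Pb0 unfolding P_def by blast
  have distinct: "w x \<noteq> w y" if "x < y" "y < b0" for x y
  proof
    assume "w x = w y"
    then have "P y" unfolding P_def using that by blast
    then have "b0 \<le> y" unfolding b0_def by (rule Least_le)
    then show False using that by simp
  qed
  define L where "L = b0 - a0"
  define c where "c = (\<lambda>j. w (a0 + j))"
  have L3: "L \<ge> 3"
  proof (rule ccontr)
    assume "\<not> L \<ge> 3"
    then have "L = 1 \<or> L = 2" using a0 unfolding L_def by linarith
    then show False
    proof
      assume "L = 1"
      then have "b0 = Suc a0" unfolding L_def using a0 by simp
      then show False using wE[of a0] a0 sg by (simp add: simple_graph_def)
    next
      assume "L = 2"
      then have "b0 = Suc (Suc a0)" unfolding L_def using a0 by simp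
      then show False using wnb[of a0] a0 by simp
    qed
  qed
  have inj: "inj_on c {..<L}"
  proof (rule inj_onI)
    fix x y assume xy: "x \<in> {..<L}" "y \<in> {..<L}" "c x = c y"
    show "x = y"
    proof (rule ccontr)
      assume "x \<noteq> y"
      then have "x < y \<or> y < x" by linarith
      moreover have "a0 + x < b0" "a0 + y < b0" using xy unfolding L_def by auto
      ultimately show False
        using distinct[of "a0+x" "a0+y"] distinct[of "a0+y" "a0+x"] xy unfolding c_def
        by auto
    qed
  qed
  have edges: "\<forall>i<L. E (c i) (c (Suc i mod L))"
  proof (intro allI impI)
    fix i assume i: "i < L"
    show "E (c i) (c (Suc i mod L))"
    proof (cases "Suc i < L")
      case True
      then show ?thesis using wE[of "a0+i"] by (simp add: c_def)
    next
      case False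
      then have "Suc i = L" using i by simp
      then have "Suc i mod L = 0" by simp
      moreover have "a0 + Suc i = b0" using \<open>Suc i = L\<close> a0 unfolding L_def by simp
      ultimately show ?thesis using wE[of "a0+i"] a0 by (simp add: c_def)
    qed
  qed
  have "has_cycle_of_length E L"
    unfolding has_cycle_of_length_def using L3 inj edges by blast
  moreover have "L \<le> card W" using b0le unfolding L_def by simp
  ultimately show ?thesis by blast
qed

lemma low_degree_vertex:
  fixes E :: "'a::finite \<Rightarrow> 'a \<Rightarrow> bool"
  assumes sg: "simple_graph E" and g: "girth E \<ge> enat (2 * d)"
    and W: "card W < 2 * d" "W \<noteq> {}"
  shows "\<exists>v\<in>W. \<forall>u\<in>W. \<forall>w\<in>W. E v u \<and> E v w \<longrightarrow> u = w"
proof (rule ccontr)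
  assume "\<not> ?thesis"
  then have "\<And>v. v \<in> W \<Longrightarrow> \<exists>u\<in>W. \<exists>w\<in>W. u \<noteq> w \<and> E v u \<and> E v w" by blast
  then obtain L where L: "has_cycle_of_length E L" "L \<le> card W"
    using cycle_from_degree2[OF sg finite W(2)] by blast
  have "enat (2 * d) \<le> enat L" using g girth_le[OF L(1)] by (rule order_trans)
  then show False using L W by simp
qed

lemma big_indep:
  fixes E :: "'a::finite \<Rightarrow> 'a \<Rightarrow> bool"
  assumes sg: "simple_graph E" and g: "girth E \<ge> enat (2 * d)"
  shows "card W < 2 * d \<Longrightarrow> \<exists>I\<subseteq>W. independent_set E I \<and> card W \<le> 2 * card I"
proof (induction "card W" arbitrary: W rule: less_induct)
  case less
  show ?case
  proof (cases "W = {}")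
    case True
    then show ?thesis by (auto simp: independent_set_def)
  next
    case False
    obtain v where v: "v \<in> W" "\<forall>u\<in>W. \<forall>w\<in>W. E v u \<and> E v w \<longrightarrow> u = w"
      using low_degree_vertex[OF sg g less.prems False] by blast
    have sym: "E x y \<Longrightarrow> E y x" for x y using sg by (simp add: simple_graph_def)
    have irr: "\<not> E x x" for x using sg by (simp add: simple_graph_def)
    show ?thesis
    proof (cases "\<exists>u\<in>W. E v u")
      case False
      define W' where "W' = W - {v}"
      have cW': "card W' < card W" unfolding W'_def using v(1) by (metis card_Diff1_less finite)
      obtain I' where I': "I' \<subseteq> W'" "independent_set E I'" "card W' \<le> 2 * card I'"
        using less.hyps[OF cW'] cW' less.prems by force
      have vI': "v \<notin> I'" using I'(1) unfolding W'_def by blast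
      have "independent_set E (insert v I')"
        using I' False irr sym unfolding independent_set_def W'_def by blast
      moreover have "card W \<le> 2 * card (insert v I')"
        using I'(3) vI' v(1) unfolding W'_def
        by (simp add: card_insert_if)
      ultimately show ?thesis using I'(1) v(1) unfolding W'_def by blast
    next
      case True
      then obtain u where u: "u \<in> W" "E v u" by blast
      have only: "\<And>x. x \<in> W \<Longrightarrow> E v x \<Longrightarrow> x = u" using v u by metis
      define W' where "W' = W - {u, v}"
      have uv: "u \<noteq> v" using u irr by blast
      have sub: "{u, v} \<subseteq> W" using u(1) v(1) by blast
      have c2: "card {u, v} = 2" using uv by simp
      have "card {u, v} \<le> card W" using sub by (intro card_mono) simp_all
      moreover have "card W' = card W - card {u, v}"
        unfolding W'_def using sub by (simp add: card_Diff_subset)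
      ultimately have cardW: "card W = card W' + 2" using c2 by linarith
      have cW': "card W' < card W" using cardW by simp
      obtain I' where I': "I' \<subseteq> W'" "independent_set E I'" "card W' \<le> 2 * card I'"
        using less.hyps[OF cW'] cW' less.prems by force
      have vI': "v \<notin> I'" using I'(1) unfolding W'_def by blast
      have "independent_set E (insert v I')"
        using I' only irr sym unfolding independent_set_def W'_def by blast
      moreover have "card W \<le> 2 * card (insert v I')"
        using I'(3) vI' cardW by (simp add: card_insert_if)
      ultimately show ?thesis using I'(1) v(1) unfolding W'_def by blast
    qed
  qed
qed

lemma Delta_downclosed: "downclosed (Delta_t d (E::'a::finite \<Rightarrow> 'a \<Rightarrow> bool))"
  unfolding downclosed_def Delta_t_def
proof (intro allI impI)
  fix \<sigma> \<rho> :: "'a set"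
  assume "\<sigma> \<in> {\<sigma>. d \<le> indep_num E (UNIV - \<sigma>)}" "\<rho> \<subseteq> \<sigma>"
  moreover have "indep_num E (UNIV - \<sigma>) \<le> indep_num E (UNIV - \<rho>)"
    using \<open>\<rho> \<subseteq> \<sigma>\<close> by (intro indep_num_mono) blast
  ultimately show "\<rho> \<in> {\<sigma>. d \<le> indep_num E (UNIV - \<sigma>)}" by simp
qed

lemma Delta_small:
  fixes E :: "'a::finite \<Rightarrow> 'a \<Rightarrow> bool"
  assumes sg: "simple_graph E" and d: "d \<ge> 2" and n: "CARD('a) \<ge> 2 * d + k"
    and g: "girth E \<ge> enat (2 * d)" and \<sigma>: "card \<sigma> \<le> k + 1"
  shows "\<sigma> \<in> Delta_t d E"
proof -
  have "card (UNIV - \<sigma>) = CARD('a) - card \<sigma>"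
    by (simp add: card_Diff_subset)
  then have c: "2 * d - 1 \<le> card (UNIV - \<sigma>)" using n \<sigma> by linarith
  obtain W where W: "W \<subseteq> UNIV - \<sigma>" "card W = 2 * d - 1"
    using obtain_subset_with_card_n[OF c] by blast
  have "card W < 2 * d" using W(2) d by simp
  then obtain I where I: "I \<subseteq> W" "independent_set E I" "card W \<le> 2 * card I"
    using big_indep[OF sg g] by blast
  have "d \<le> card I" using I(3) W(2) d by linarith
  also have "card I \<le> indep_num E (UNIV - \<sigma>)"
    using I W by (intro indep_num_ge) auto
  finally show ?thesis unfolding Delta_t_def by simp
qed

definition Cl :: "'a::finite set \<Rightarrow> (real^'a) set" where
  "Cl \<tau> = {y. (\<forall>v. 0 \<le> y$v) \<and> sum (\<lambda>v. y$v) UNIV = 1 \<and> (\<forall>v. v \<notin> \<tau> \<longrightarrow> y$v = 0)}"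

definition Geo :: "'a::finite set set \<Rightarrow> (real^'a) set" where
  "Geo L = {y. (\<forall>v. 0 \<le> y$v) \<and> sum (\<lambda>v. y$v) UNIV = 1 \<and> {v. y$v \<noteq> 0} \<in> L}"

definition bas :: "'a::finite set \<Rightarrow> (real^'a) set" where
  "bas \<tau> = (\<lambda>v. axis v 1) ` \<tau>"

lemma finite_bas [simp]: "finite (bas \<tau>)"
  by (simp add: bas_def)

lemma inj_axis1: "inj_on (\<lambda>v::'a::finite. axis v (1::real)) A"
  by (auto simp: inj_on_def axis_eq_axis)

lemma sum_bas_comp:
  "(\<Sum>x\<in>bas \<tau>. u x *\<^sub>R x) $ w = (if w \<in> \<tau> then u (axis w 1) else (0::real))"
proof -
  have "(\<Sum>x\<in>bas \<tau>. u x *\<^sub>R x) = (\<Sum>v\<in>\<tau>. u (axis v 1) *\<^sub>R axis v (1::real))"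
    unfolding bas_def by (simp add: sum.reindex[OF inj_axis1])
  then have "(\<Sum>x\<in>bas \<tau>. u x *\<^sub>R x) $ w = (\<Sum>v\<in>\<tau>. u (axis v 1) * (axis v (1::real) $ w))"
    by simp
  also have "\<dots> = (\<Sum>v\<in>\<tau>. if v = w then u (axis w 1) else 0)"
    by (intro sum.cong) (auto simp: axis_def)
  also have "\<dots> = (if w \<in> \<tau> then u (axis w 1) else 0)"
    by (simp add: sum.delta')
  finally show ?thesis .
qed

lemma sum_bas_u: "sum u (bas \<tau>) = (\<Sum>v\<in>\<tau>. u (axis v (1::real)))"
  unfolding bas_def by (simp add: sum.reindex[OF inj_axis1])

lemma sum_supp:
  fixes y :: "real^'a::finite"
  assumes "\<forall>v. v \<notin> \<tau> \<longrightarrow> y$v = 0"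
  shows "sum (\<lambda>v. y$v) UNIV = sum (\<lambda>v. y$v) \<tau>"
  using assms by (intro sum.mono_neutral_right) auto

lemma vec_from_bas:
  fixes y :: "real^'a::finite"
  assumes "\<forall>v. v \<notin> \<tau> \<longrightarrow> y$v = 0"
  shows "(\<Sum>x\<in>bas \<tau>. (x \<bullet> y) *\<^sub>R x) = y"
unfolding vec_eq_iff proof
  fix w
  show "(\<Sum>x\<in>bas \<tau>. (x \<bullet> y) *\<^sub>R x) $ w = y $ w"
    by (subst sum_bas_comp) (use assms in \<open>simp add: inner_axis'\<close>)
qed

lemma inner_axis1: "axis v (1::real) \<bullet> y = y $ v"
  by (simp add: inner_axis')

lemma Cl_hull: "Cl \<tau> = convex hull (bas \<tau>)"
proof -
  have fin: "finite (bas \<tau>)" by simp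
  show ?thesis
  proof (rule set_eqI)
    fix y :: "real^'a"
    show "y \<in> Cl \<tau> \<longleftrightarrow> y \<in> convex hull (bas \<tau>)"
    proof
      assume y: "y \<in> Cl \<tau>"
      then have supp: "\<forall>v. v \<notin> \<tau> \<longrightarrow> y$v = 0" by (simp add: Cl_def)
      show "y \<in> convex hull (bas \<tau>)"
        unfolding convex_hull_finite[OF fin]
      proof (intro CollectI exI conjI)
        show "\<forall>x\<in>bas \<tau>. 0 \<le> x \<bullet> y" using y by (auto simp: bas_def Cl_def inner_axis1)
        show "sum (\<lambda>x. x \<bullet> y) (bas \<tau>) = 1"
          using y sum_supp[OF supp] by (simp add: sum_bas_u inner_axis1 Cl_def)
        show "(\<Sum>x\<in>bas \<tau>. (x \<bullet> y) *\<^sub>R x) = y" by (rule vec_from_bas[OF supp])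
      qed
    next
      assume "y \<in> convex hull (bas \<tau>)"
      then obtain u where u: "\<forall>x\<in>bas \<tau>. 0 \<le> u x" "sum u (bas \<tau>) = 1" "(\<Sum>x\<in>bas \<tau>. u x *\<^sub>R x) = y"
        unfolding convex_hull_finite[OF fin] by blast
      have yc: "y $ w = (if w \<in> \<tau> then u (axis w 1) else 0)" for w
        using sum_bas_comp[of u \<tau> w] u(3) by simp
      have supp: "\<forall>v. v \<notin> \<tau> \<longrightarrow> y$v = 0" using yc by simp
      have "sum (\<lambda>v. y$v) UNIV = sum (\<lambda>v. y$v) \<tau>" by (rule sum_supp[OF supp])
      also have "\<dots> = 1" using u(2) yc by (simp add: sum_bas_u)
      finally show "y \<in> Cl \<tau>"
        using yc u(1) supp by (auto simp: Cl_def bas_def)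
    qed
  qed
qed

lemma bas_indep: "\<not> affine_dependent (bas \<tau>)"
proof
  assume "affine_dependent (bas \<tau>)"
  then have "dependent (bas \<tau>)" by (rule affine_dependent_imp_dependent)
  moreover have "bas \<tau> \<subseteq> Basis" by (auto simp: bas_def)
  ultimately show False using independent_Basis dependent_mono by blast
qed

lemma card_bas: "card (bas \<tau>) = card \<tau>"
  unfolding bas_def by (rule card_image[OF inj_axis1])

lemma aff_dim_Cl: "aff_dim (Cl \<tau>) = int (card \<tau>) - 1"
proof -
  have "of_nat (card (bas \<tau>)) = aff_dim (bas \<tau>) + 1"
    using bas_indep[of \<tau>] by (rule aff_dim_affine_independent)
  then show ?thesis by (simp add: Cl_hull aff_dim_convex_hull card_bas)
qed

lemma compact_Cl: "compact (Cl \<tau>)"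
  unfolding Cl_hull by (rule compact_convex_hull) (simp add: bas_def finite_imp_compact)

lemma convex_Cl: "convex (Cl \<tau>)"
  unfolding Cl_hull by simp

lemma relint_Cl: "rel_interior (Cl \<tau>) = {y \<in> Cl \<tau>. \<forall>v\<in>\<tau>. 0 < y$v}"
proof (rule set_eqI)
  fix y :: "real^'a"
  have fin: "finite (bas \<tau>)" by simp
  show "y \<in> rel_interior (Cl \<tau>) \<longleftrightarrow> y \<in> {y \<in> Cl \<tau>. \<forall>v\<in>\<tau>. 0 < y$v}"
  proof
    assume "y \<in> rel_interior (Cl \<tau>)"
    then obtain u where u: "\<forall>x\<in>bas \<tau>. 0 < u x" "sum u (bas \<tau>) = 1" "(\<Sum>x\<in>bas \<tau>. u x *\<^sub>R x) = y"
      unfolding Cl_hull rel_interior_convex_hull_explicit[OF bas_indep] by blast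
    have yc: "y $ w = (if w \<in> \<tau> then u (axis w 1) else 0)" for w
      using sum_bas_comp[of u \<tau> w] u(3) by simp
    have "y \<in> Cl \<tau>" using \<open>y \<in> rel_interior (Cl \<tau>)\<close> rel_interior_subset by blast
    then show "y \<in> {y \<in> Cl \<tau>. \<forall>v\<in>\<tau>. 0 < y$v}" using yc u(1) by (auto simp: bas_def)
  next
    assume y: "y \<in> {y \<in> Cl \<tau>. \<forall>v\<in>\<tau>. 0 < y$v}"
    then have supp: "\<forall>v. v \<notin> \<tau> \<longrightarrow> y$v = 0" by (simp add: Cl_def)
    show "y \<in> rel_interior (Cl \<tau>)"
      unfolding Cl_hull rel_interior_convex_hull_explicit[OF bas_indep]
    proof (intro CollectI exI conjI)
      show "\<forall>x\<in>bas \<tau>. 0 < x \<bullet> y" using y by (auto simp: bas_def inner_axis1)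
      show "sum (\<lambda>x. x \<bullet> y) (bas \<tau>) = 1"
        using y sum_supp[OF supp] by (simp add: sum_bas_u inner_axis1 Cl_def)
      show "(\<Sum>x\<in>bas \<tau>. (x \<bullet> y) *\<^sub>R x) = y" by (rule vec_from_bas[OF supp])
    qed
  qed
qed

lemma relfront_Cl: "rel_frontier (Cl \<tau>) = {y \<in> Cl \<tau>. \<exists>v\<in>\<tau>. y$v = 0}"
proof -
  have "closure (Cl \<tau>) = Cl \<tau>" by (rule closure_closed[OF compact_imp_closed[OF compact_Cl]])
  moreover have "y $ v \<ge> 0" if "y \<in> Cl \<tau>" for y v using that by (simp add: Cl_def)
  ultimately show ?thesis unfolding rel_frontier_def relint_Cl
    by (auto simp: less_le)
qed

lemma Geo_Union:
  assumes "downclosed L"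
  shows "Geo L = \<Union> (Cl ` L)"
proof (rule set_eqI)
  fix y :: "real^'a"
  show "y \<in> Geo L \<longleftrightarrow> y \<in> \<Union> (Cl ` L)"
  proof
    assume "y \<in> Geo L"
    then have "y \<in> Cl {v. y$v \<noteq> 0}" "{v. y$v \<noteq> 0} \<in> L" by (auto simp: Geo_def Cl_def)
    then show "y \<in> \<Union> (Cl ` L)" by blast
  next
    assume "y \<in> \<Union> (Cl ` L)"
    then obtain \<tau> where "\<tau> \<in> L" "y \<in> Cl \<tau>" by blast
    moreover then have "{v. y$v \<noteq> 0} \<subseteq> \<tau>" by (auto simp: Cl_def)
    ultimately show "y \<in> Geo L" using assms unfolding downclosed_def by (auto simp: Geo_def Cl_def)
  qed
qed

lemma closed_Geo:
  assumes "downclosed L"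
  shows "closed (Geo L)"
  unfolding Geo_Union[OF assms]
  by (intro closed_Union) (auto intro: compact_imp_closed compact_Cl)

lemma RF_iff:
  fixes y :: "real^'a::finite"
  shows "y \<in> rel_frontier (Cl \<tau>) \<longleftrightarrow> y \<in> Cl \<tau> \<and> {v. y$v \<noteq> 0} \<noteq> \<tau>"
  unfolding relfront_Cl by (auto simp: Cl_def)

lemma Cl_Geo:
  fixes y :: "real^'a::finite"
  assumes "y \<in> Cl \<tau>" "{v. y$v \<noteq> 0} \<in> L"
  shows "y \<in> Geo L"
  using assms by (auto simp: Cl_def Geo_def)

lemma Cl_supp:
  fixes y :: "real^'a::finite"
  assumes "y \<in> Cl \<tau>" shows "{v. y$v \<noteq> 0} \<subseteq> \<tau>"
  using assms by (auto simp: Cl_def)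

lemma no_bounded_comp:
  fixes T0 T1 :: "'b::euclidean_space set"
  assumes T: "affine T0" "affine T1" "T0 \<subseteq> T1" "aff_dim T0 < aff_dim T1"
    and A: "closed A" "A \<subseteq> T1"
    and C: "C \<in> components (T1 - A)"
  shows "C \<inter> (T1 - T0) \<noteq> {}"
proof
  assume CT: "C \<inter> (T1 - T0) = {}"
  have Csub: "C \<subseteq> T1 - A" using C by (rule in_components_subset)
  then have "C \<subseteq> T0" using CT by blast
  have Cne: "C \<noteq> {}" using C by (rule in_components_nonempty)
  have op1: "openin (top_of_set T1) (T1 - A)"
    using A by (intro openin_diff) (auto intro: closed_subset)
  have "locally connected (T1 - A)"
    using locally_open_subset[OF convex_imp_locally_connected[OF affine_imp_convex[OF T(2)]] op1] .
  then have "openin (top_of_set (T1 - A)) C"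
    using C by (rule openin_components_locally_connected)
  then have "openin (top_of_set T1) C" using op1 by (rule openin_trans)
  then have "aff_dim C = aff_dim T1" using T(2) Cne by (rule aff_dim_openin)
  moreover have "aff_dim C \<le> aff_dim T0" using \<open>C \<subseteq> T0\<close> by (rule aff_dim_subset)
  ultimately show False using T(4) by simp
qed

lemma push:
  fixes H :: "'b::euclidean_space \<Rightarrow> real^'a::finite"
    and T0 T1 D S :: "'b set"
  assumes T: "affine T0" "affine T1" "T0 \<subseteq> T1" "aff_dim T0 < aff_dim T1"
    and D: "compact D" "D \<subseteq> T0" "S \<subseteq> D"
    and K: "downclosed K"
  shows "downclosed L \<Longrightarrow> K \<subseteq> L \<Longrightarrow> (\<forall>\<tau>\<in>L-K. aff_dim T1 \<le> int (card \<tau>) - 1)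
    \<Longrightarrow> continuous_on D H \<Longrightarrow> H ` D \<subseteq> Geo L \<Longrightarrow> H ` S \<subseteq> Geo K
    \<Longrightarrow> \<exists>H'. continuous_on D H' \<and> H' ` D \<subseteq> Geo K \<and> (\<forall>x\<in>S. H' x = H x)"
proof (induction "card (L - K)" arbitrary: L H rule: less_induct)
  case less
  show ?case
  proof (cases "L - K = {}")
    case True
    then have "L = K" using less.prems(2) by blast
    then show ?thesis using less.prems by blast
  next
    case False
    have finLK: "finite (L - K)" by simp
    define m where "m = Max (card ` (L - K))"
    have "m \<in> card ` (L - K)" unfolding m_def using finLK False by (intro Max_in) auto
    then obtain \<tau> where \<tau>: "\<tau> \<in> L - K" "card \<tau> = m" by blast
    have maxc: "card \<sigma> \<le> card \<tau>" if "\<sigma> \<in> L - K" for \<sigma>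
      unfolding \<tau>(2) m_def using finLK that by (intro Max_ge) auto
    define L' where "L' = L - {\<tau>}"
    have dcL: "downclosed L" using less.prems(1) .
    have dcL': "downclosed L'"
      unfolding downclosed_def L'_def
    proof (intro allI impI)
      fix \<sigma> \<rho> assume a: "\<sigma> \<in> L - {\<tau>}" "\<rho> \<subseteq> \<sigma>"
      then have "\<rho> \<in> L" using dcL unfolding downclosed_def by blast
      moreover have "\<rho> \<noteq> \<tau>"
      proof
        assume "\<rho> = \<tau>"
        then have "\<tau> \<subset> \<sigma>" using a by blast
        then have "\<sigma> \<notin> K" using K \<tau>(1) unfolding downclosed_def by blast
        then have "card \<sigma> \<le> card \<tau>" using maxc a by blast
        moreover have "card \<tau> < card \<sigma>" using \<open>\<tau> \<subset> \<sigma>\<close> by (simp add: psubset_card_mono)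
        ultimately show False by simp
      qed
      ultimately show "\<rho> \<in> L - {\<tau>}" by blast
    qed
    have KL': "K \<subseteq> L'" using less.prems(2) \<tau>(1) unfolding L'_def by blast
    have cardlt: "card (L' - K) < card (L - K)"
    proof -
      have "L' - K = (L - K) - {\<tau>}" unfolding L'_def by blast
      then show ?thesis using card_Diff1_less[OF finLK \<tau>(1)] by simp
    qed
    have affc: "aff_dim T1 \<le> int (card \<tau>) - 1" using less.prems(3) \<tau>(1) by blast
    have contH: "continuous_on D H" using less.prems(4) .
    define RF where "RF = rel_frontier (Cl \<tau>)"
    define A0 where "A0 = D \<inter> H -` RF"
    have clD: "closed D" using D(1) by (rule compact_imp_closed)
    have clA0: "closed A0" unfolding A0_def RF_def
      by (rule continuous_closed_preimage[OF contH clD closed_rel_frontier])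
    have cA0: "compact A0"
    proof -
      have "A0 = D \<inter> A0" unfolding A0_def by blast
      then show ?thesis using compact_Int_closed[OF D(1) clA0] by simp
    qed
    have A0T1: "A0 \<subseteq> T1" unfolding A0_def using D(2) T(3) by blast
    obtain K' g where K': "finite K'" "K' \<subseteq> T1 - T0" "K' \<subseteq> T1" "disjnt K' A0"
        "continuous_on (T1 - K') g" "g \<in> (T1 - K') \<rightarrow> rel_frontier (Cl \<tau>)"
        "\<And>x. x \<in> A0 \<Longrightarrow> g x = H x"
    proof (rule extend_map_affine_to_sphere_cofinite_gen[of A0 "Cl \<tau>" T1 H "T1 - T0"])
      show "compact A0" by (rule cA0)
      show "convex (Cl \<tau>)" by (rule convex_Cl)
      show "bounded (Cl \<tau>)" by (rule compact_imp_bounded[OF compact_Cl])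
      show "affine T1" by (rule T(2))
      show "A0 \<subseteq> T1" by (rule A0T1)
      show "aff_dim T1 \<le> aff_dim (Cl \<tau>)" using affc by (simp add: aff_dim_Cl)
      show "continuous_on A0 H" using contH by (rule continuous_on_subset) (auto simp: A0_def)
      show "H \<in> A0 \<rightarrow> rel_frontier (Cl \<tau>)" by (auto simp: A0_def RF_def)
      show "C \<inter> (T1 - T0) \<noteq> {}" if "C \<in> components (T1 - A0)" "bounded C" for C
        using no_bounded_comp[OF T clA0 A0T1 that(1)] .
    qed blast
    have DK': "D \<subseteq> T1 - K'" using D(2) K'(2) T(3) by blast
    have contg: "continuous_on D g" using K'(5) DK' by (rule continuous_on_subset)
    have gRF: "g x \<in> RF" if "x \<in> D" for x using K'(6) DK' that unfolding RF_def by blast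
    define A where "A = D \<inter> H -` Cl \<tau>"
    define B where "B = D \<inter> H -` Geo L'"
    have clA: "closed A" unfolding A_def
      by (rule continuous_closed_preimage[OF contH clD compact_imp_closed[OF compact_Cl]])
    have clB: "closed B" unfolding B_def
      by (rule continuous_closed_preimage[OF contH clD closed_Geo[OF dcL']])
    have GeoL: "y \<in> Cl \<tau> \<or> y \<in> Geo L'" if "y \<in> Geo L" for y
    proof (cases "{v. y$v \<noteq> 0} = \<tau>")
      case True
      then show ?thesis using that by (auto simp: Geo_def Cl_def)
    next
      case False
      then show ?thesis using that by (auto simp: Geo_def L'_def)
    qed
    have ABD: "A \<union> B = D"
      using less.prems(5) GeoL unfolding A_def B_def by blast
    define H1 where "H1 = (\<lambda>x. if H x \<in> Cl \<tau> then g x else H x)"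
    have RFGeo: "y \<in> Geo L'" if "y \<in> RF" for y
    proof -
      have y: "y \<in> Cl \<tau>" "{v. y$v \<noteq> 0} \<noteq> \<tau>" using that unfolding RF_def RF_iff by auto
      have "{v. y$v \<noteq> 0} \<in> L" using Cl_supp[OF y(1)] \<tau>(1) dcL unfolding downclosed_def by blast
      then have "{v. y$v \<noteq> 0} \<in> L'" using y(2) unfolding L'_def by blast
      then show ?thesis using Cl_Geo[OF y(1)] by blast
    qed
    have contH1: "continuous_on D H1"
    proof -
      have "continuous_on (A \<union> B) (\<lambda>x. if H x \<in> Cl \<tau> then g x else H x)"
      proof (rule continuous_on_cases[OF clA clB])
        show "continuous_on A g" using contg by (rule continuous_on_subset) (auto simp: A_def)
        show "continuous_on B H" using contH by (rule continuous_on_subset) (auto simp: B_def)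
        show "\<forall>x. (x \<in> A \<and> \<not> H x \<in> Cl \<tau>) \<or> (x \<in> B \<and> H x \<in> Cl \<tau>) \<longrightarrow> g x = H x"
        proof (intro allI impI)
          fix x assume "(x \<in> A \<and> \<not> H x \<in> Cl \<tau>) \<or> (x \<in> B \<and> H x \<in> Cl \<tau>)"
          then have x: "x \<in> D" "H x \<in> Geo L'" "H x \<in> Cl \<tau>" unfolding A_def B_def by auto
          have "{v. H x $ v \<noteq> 0} \<noteq> \<tau>" using x(2) unfolding Geo_def L'_def by auto
          then have "H x \<in> RF" unfolding RF_def RF_iff using x(3) by blast
          then show "g x = H x" using K'(7) x(1) unfolding A0_def by blast
        qed
      qed
      then show ?thesis unfolding H1_def ABD .
    qed
    have imH1: "H1 ` D \<subseteq> Geo L'"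
    proof
      fix y assume "y \<in> H1 ` D"
      then obtain x where x: "x \<in> D" "y = H1 x" by blast
      show "y \<in> Geo L'"
      proof (cases "H x \<in> Cl \<tau>")
        case True
        then show ?thesis using x gRF RFGeo unfolding H1_def by auto
      next
        case False
        then show ?thesis using x GeoL less.prems(5) unfolding H1_def by auto
      qed
    qed
    have SH1: "H1 x = H x" if "x \<in> S" for x
    proof (cases "H x \<in> Cl \<tau>")
      case True
      have "H x \<in> Geo K" using less.prems(6) that by blast
      then have "{v. H x $ v \<noteq> 0} \<in> K" unfolding Geo_def by blast
      then have "{v. H x $ v \<noteq> 0} \<noteq> \<tau>" using \<tau>(1) by blast
      then have "H x \<in> RF" unfolding RF_def RF_iff using True by blast
      then have "g x = H x" using K'(7) that D(3) unfolding A0_def by blast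
      then show ?thesis unfolding H1_def by simp
    next
      case False
      then show ?thesis unfolding H1_def by simp
    qed
    have imS: "H1 ` S \<subseteq> Geo K" using less.prems(6) SH1 by auto
    have "\<forall>\<tau>\<in>L'-K. aff_dim T1 \<le> int (card \<tau>) - 1" using less.prems(3) unfolding L'_def by blast
    then obtain H' where H': "continuous_on D H'" "H' ` D \<subseteq> Geo K" "\<forall>x\<in>S. H' x = H1 x"
      using less.hyps[OF cardlt dcL' KL' _ contH1 imH1 imS] by blast
    then show ?thesis using SH1 by auto
  qed
qed

lemma continuous_map_vec_iff:
  "continuous_map X euclidean (h :: _ \<Rightarrow> real^'n) \<longleftrightarrow> (\<forall>v. continuous_map X euclideanreal (\<lambda>x. h x $ v))"
proof
  assume h: "continuous_map X euclidean h"
  show "\<forall>v. continuous_map X euclideanreal (\<lambda>x. h x $ v)"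
  proof
    fix v
    have "continuous_map euclidean euclideanreal (\<lambda>y::real^'n. y $ v)"
      by (simp add: continuous_on_component continuous_on_id)
    from continuous_map_compose[OF h this] show "continuous_map X euclideanreal (\<lambda>x. h x $ v)"
      by (simp add: o_def)
  qed
next
  assume c: "\<forall>v. continuous_map X euclideanreal (\<lambda>x. h x $ v)"
  show "continuous_map X euclidean h"
    unfolding continuous_map_atin
  proof
    fix x assume x: "x \<in> topspace X"
    have "((\<lambda>y. h y $ v) \<longlongrightarrow> h x $ v) (atin X x)" for v
      using c x unfolding continuous_map_atin by simp
    then show "limitin euclidean h (h x) (atin X x)"
      by (simp add: vec_tendstoI)
  qed
qed

definition csub :: "'a::finite set \<Rightarrow> (real^'a) set" where
  "csub P = {x. \<forall>v. v \<notin> P \<longrightarrow> x$v = 0}"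

lemma subspace_csub: "subspace (csub P)"
  unfolding subspace_def csub_def by simp

lemma aff_dim_csub: "aff_dim (csub P) = int (card P)"
proof -
  have "aff_dim (csub P) = int (dim (csub P))" by (rule aff_dim_subspace[OF subspace_csub])
  also have "dim (csub P) = vec.dim (csub P)" by (simp add: dim_vec_eq)
  also have "\<dots> = card P" unfolding csub_def by (rule dim_substandard_cart)
  finally show ?thesis .
qed

lemma closed_csub: "closed (csub P)"
  by (rule closed_subspace[OF subspace_csub])

lemma csub_mono: "P \<subseteq> Q \<Longrightarrow> csub P \<subseteq> csub Q"
  unfolding csub_def by auto

lemma norm_csub:
  fixes y :: "real^'a::finite"
  assumes y: "y \<in> csub (e ` {..i})" and e: "inj_on e {..(i::nat)}"
  shows "(norm y)^2 = (\<Sum>j\<le>i. (y $ e j)^2)"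
proof -
  have "(norm y)^2 = (\<Sum>v\<in>UNIV. (y$v)^2)"
    unfolding power2_norm_eq_inner by (simp add: inner_vec_def power2_eq_square)
  also have "\<dots> = (\<Sum>v\<in>e ` {..i}. (y$v)^2)"
    using y unfolding csub_def by (intro sum.mono_neutral_right) auto
  also have "\<dots> = (\<Sum>j\<le>i. (y $ e j)^2)"
    by (simp add: sum.reindex[OF e])
  finally show ?thesis .
qed

lemma sphere_null:
  fixes K :: "'a::finite set set" and f :: "(nat \<Rightarrow> real) \<Rightarrow> ('a \<Rightarrow> real)"
  assumes dc: "downclosed K" and small: "\<And>\<sigma>. card \<sigma> \<le> i + 2 \<Longrightarrow> \<sigma> \<in> K"
    and n: "i + 2 < CARD('a)"
    and f: "continuous_map (nsphere i) (geom_real K) f"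
  shows "\<exists>c. homotopic_with (\<lambda>_. True) (nsphere i) (geom_real K) f (\<lambda>_. c)"
proof -
  obtain e where e: "bij_betw e {0..<CARD('a)} (UNIV::'a set)"
    using ex_bij_betw_nat_finite[of "UNIV::'a set"] by auto
  have e1: "inj_on e {..Suc i}"
    using bij_betw_imp_inj_on[OF e] by (rule inj_on_subset) (use n in auto)
  have e0: "inj_on e {..i}" using e1 by (rule inj_on_subset) auto
  define P0 where "P0 = e ` {..i}"
  define P1 where "P1 = e ` {..Suc i}"
  define T0 where "T0 = csub P0"
  define T1 where "T1 = csub P1"
  have affT0: "aff_dim T0 = int (i+1)"
    unfolding T0_def aff_dim_csub P0_def by (simp add: card_image[OF e0])
  have affT1: "aff_dim T1 = int (i+2)"
    unfolding T1_def aff_dim_csub P1_def by (simp add: card_image[OF e1])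
  have T01: "T0 \<subseteq> T1" unfolding T0_def T1_def P0_def P1_def by (rule csub_mono) auto
  define \<phi> where "\<phi> = (\<lambda>x::nat\<Rightarrow>real. (\<chi> v. if v \<in> P0 then x (inv_into {..i} e v) else 0) :: real^'a)"
  define \<psi> where "\<psi> = (\<lambda>(y::real^'a) j. if j \<le> i then y $ e j else 0)"
  define Dom where "Dom = T0 \<inter> cball 0 1"
  define Sph where "Sph = T0 \<inter> sphere 0 1"
  have topS: "topspace (nsphere i) = {x. (\<Sum>j\<le>i. x j ^ 2) = 1 \<and> (\<forall>j>i. x j = 0)}"
    by (simp add: nsphere)
  have \<phi>T0: "\<phi> x \<in> T0" for x
    unfolding \<phi>_def T0_def csub_def by simp
  have \<phi>c: "\<phi> x $ e j = x j" if "j \<le> i" for x j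
    unfolding \<phi>_def P0_def using that e0 by (simp add: inv_into_f_f)
  have \<phi>S: "\<phi> x \<in> Sph" if "x \<in> topspace (nsphere i)" for x
  proof -
    have "(norm (\<phi> x))^2 = (\<Sum>j\<le>i. (\<phi> x $ e j)^2)"
      using norm_csub[OF _ e0] \<phi>T0 unfolding T0_def P0_def by blast
    also have "\<dots> = (\<Sum>j\<le>i. (x j)^2)" using \<phi>c by simp
    also have "\<dots> = 1" using that topS by simp
    finally have "norm (\<phi> x) = 1" using norm_ge_zero[of "\<phi> x"] by (auto simp: power2_eq_1_iff)
    then show ?thesis using \<phi>T0 unfolding Sph_def by simp
  qed
  have \<psi>\<phi>: "\<psi> (\<phi> x) = x" if "x \<in> topspace (nsphere i)" for x
    using that topS \<phi>c unfolding \<psi>_def by (auto simp: fun_eq_iff not_le)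
  have \<psi>S: "\<psi> y \<in> topspace (nsphere i)" if "y \<in> Sph" for y
  proof -
    have "(\<Sum>j\<le>i. (\<psi> y j)^2) = (\<Sum>j\<le>i. (y $ e j)^2)" unfolding \<psi>_def by simp
    also have "\<dots> = (norm y)^2"
      using norm_csub[OF _ e0, of y] that unfolding Sph_def T0_def P0_def by simp
    also have "\<dots> = 1" using that unfolding Sph_def by simp
    finally show ?thesis unfolding topS \<psi>_def by simp
  qed
  have cont\<psi>: "continuous_map (top_of_set Sph) (nsphere i) \<psi>"
    unfolding nsphere continuous_map_in_subtopology
  proof
    show "continuous_map (top_of_set Sph) (powertop_real UNIV) \<psi>"
      unfolding continuous_map_componentwise_UNIV
    proof
      fix k
      show "continuous_map (top_of_set Sph) euclideanreal (\<lambda>y. \<psi> y k)"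
      proof (cases "k \<le> i")
        case True
        then show ?thesis unfolding \<psi>_def by (simp add: continuous_on_component continuous_on_id)
      next
        case False
        then show ?thesis unfolding \<psi>_def by simp
      qed
    qed
    show "\<psi> \<in> topspace (top_of_set Sph) \<rightarrow> {x. (\<Sum>i\<le>i. (x i)\<^sup>2) = 1 \<and> (\<forall>ia>i. x ia = 0)}"
      using \<psi>S topS by auto
  qed
  have topG: "topspace (geom_real K) = {x. (\<forall>v. 0 \<le> x v) \<and> sum x UNIV = 1 \<and> {v. x v \<noteq> 0} \<in> K}"
    by (simp add: geom_real_def)
  have vl: "continuous_map (geom_real K) euclidean (vec_lambda :: ('a \<Rightarrow> real) \<Rightarrow> real^'a)"
    unfolding continuous_map_vec_iff geom_real_def
    by (simp add: continuous_map_from_subtopology continuous_map_product_projection[of _ UNIV "\<lambda>_. euclideanreal", simplified])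
  define f' where "f' = (\<lambda>y. vec_lambda (f (\<psi> y)))"
  have contf': "continuous_on Sph f'"
  proof -
    have "continuous_map (top_of_set Sph) euclidean (vec_lambda \<circ> (f \<circ> \<psi>))"
      by (rule continuous_map_compose[OF continuous_map_compose[OF cont\<psi> f] vl])
    then show ?thesis unfolding f'_def by (simp add: o_def)
  qed
  have imf': "f' ` Sph \<subseteq> Geo K"
  proof
    fix z assume "z \<in> f' ` Sph"
    then obtain y where y: "y \<in> Sph" "z = f' y" by blast
    have "f (\<psi> y) \<in> topspace (geom_real K)"
      using continuous_map_image_subset_topspace[OF f] \<psi>S[OF y(1)] by blast
    then show "z \<in> Geo K" unfolding topG y(2) f'_def Geo_def by simp
  qed
  have GU: "Geo (UNIV :: 'a set set) = Cl UNIV" by (auto simp: Geo_def Cl_def)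
  obtain v0 :: 'a where True by blast
  have ax: "axis v0 (1::real) \<in> Cl UNIV"
  proof -
    have "sum (\<lambda>v. axis v0 (1::real) $ v) UNIV = 1"
      by (simp add: axis_def)
    then show ?thesis by (simp add: Cl_def axis_def)
  qed
  have clT0: "closed T0" unfolding T0_def by (rule closed_csub)
  have clin: "closedin (top_of_set Dom) Sph"
  proof (rule closed_subset)
    show "Sph \<subseteq> Dom" unfolding Sph_def Dom_def by auto
    show "closed Sph" unfolding Sph_def by (rule closed_Int[OF clT0 closed_sphere])
  qed
  have ne: "Cl (UNIV::'a set) \<noteq> {}" using ax by blast
  have GKU: "Geo K \<subseteq> Cl UNIV" unfolding GU[symmetric] Geo_def by (intro Collect_mono) simp
  have sub: "f' ` Sph \<subseteq> Cl UNIV" using imf' GKU by (rule order_trans)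
  obtain H0 where H0: "continuous_on Dom H0" "H0 ` Dom \<subseteq> Cl UNIV" "\<And>x. x \<in> Sph \<Longrightarrow> H0 x = f' x"
    by (rule Dugundji[OF convex_Cl ne clin contf' sub]) metis
  have aT0: "affine T0" unfolding T0_def by (rule subspace_imp_affine[OF subspace_csub])
  have aT1: "affine T1" unfolding T1_def by (rule subspace_imp_affine[OF subspace_csub])
  have cDom: "compact Dom" unfolding Dom_def using compact_Int_closed[OF compact_cball clT0]
    by (simp add: Int_commute)
  have "\<exists>H'. continuous_on Dom H' \<and> H' ` Dom \<subseteq> Geo K \<and> (\<forall>x\<in>Sph. H' x = H0 x)"
  proof (rule push[OF aT0 aT1 T01 _ cDom _ _ dc, where L="UNIV"])
    show "aff_dim T0 < aff_dim T1" using affT0 affT1 by simp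
    show "Dom \<subseteq> T0" unfolding Dom_def by blast
    show "Sph \<subseteq> Dom" unfolding Sph_def Dom_def by auto
    show "downclosed (UNIV :: 'a set set)" by (simp add: downclosed_def)
    show "K \<subseteq> UNIV" by simp
    show "\<forall>\<tau>\<in>UNIV - K. aff_dim T1 \<le> int (card \<tau>) - 1"
    proof
      fix \<tau> assume "\<tau> \<in> UNIV - K"
      then have "\<not> card \<tau> \<le> i + 2" using small by blast
      then show "aff_dim T1 \<le> int (card \<tau>) - 1" using affT1 by simp
    qed
    show "continuous_on Dom H0" by (rule H0(1))
    show "H0 ` Dom \<subseteq> Geo UNIV" using H0(2) GU by simp
    show "H0 ` Sph \<subseteq> Geo K" using imf' H0(3) by auto
  qed
  then obtain H where H: "continuous_on Dom H" "H ` Dom \<subseteq> Geo K" "\<And>x. x \<in> Sph \<Longrightarrow> H x = H0 x"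
    by blast
  define g where "g = (\<lambda>p::real \<times> (nat \<Rightarrow> real). (1 - fst p) *\<^sub>R \<phi> (snd p))"
  let ?X = "prod_topology (subtopology euclideanreal {0..1}) (nsphere i)"
  have contg: "continuous_map ?X (top_of_set Dom) g"
    unfolding continuous_map_in_subtopology
  proof
    have c1: "continuous_map ?X euclideanreal (\<lambda>p. 1 - fst p)"
    proof -
      have "continuous_map ?X euclideanreal (id \<circ> fst)"
        by (rule continuous_map_compose[OF continuous_map_fst continuous_map_id_subt])
      then show ?thesis by (intro continuous_map_diff) (auto simp: o_def)
    qed
    have c2: "continuous_map ?X euclideanreal (\<lambda>p. snd p k)" for k
    proof -
      have "continuous_map ?X euclideanreal ((\<lambda>x. x k) \<circ> snd)"
        by (rule continuous_map_compose[OF continuous_map_snd continuous_map_nsphere_projection])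
      then show ?thesis by (simp add: o_def)
    qed
    show "continuous_map ?X euclidean g"
      unfolding continuous_map_vec_iff
    proof
      fix v
      show "continuous_map ?X euclideanreal (\<lambda>x. g x $ v)"
      proof (cases "v \<in> P0")
        case True
        then show ?thesis unfolding g_def \<phi>_def using c1 c2
          by (simp add: continuous_map_real_mult)
      next
        case False
        then show ?thesis unfolding g_def \<phi>_def by simp
      qed
    qed
    show "g \<in> topspace ?X \<rightarrow> Dom"
    proof
      fix p assume "p \<in> topspace ?X"
      then have p: "fst p \<in> {0..1}" "snd p \<in> topspace (nsphere i)"
        by (auto simp: topspace_prod_topology)
      have "g p \<in> T0" unfolding g_def T0_def
        using \<phi>T0 subspace_scale[OF subspace_csub] unfolding T0_def by blast
      moreover have "norm (g p) \<le> 1"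
        using \<phi>S[OF p(2)] p(1) unfolding g_def Sph_def by simp
      ultimately show "g p \<in> Dom" unfolding Dom_def by simp
    qed
  qed
  have contH: "continuous_map (top_of_set Dom) (top_of_set (Geo K)) H"
    unfolding continuous_map_in_subtopology using H(1,2) by auto
  have vn: "continuous_map (top_of_set (Geo K)) (geom_real K) (\<lambda>y v. y $ v)"
    unfolding geom_real_def continuous_map_in_subtopology
  proof
    show "continuous_map (top_of_set (Geo K)) (powertop_real UNIV) (\<lambda>y v. y $ v)"
      unfolding continuous_map_componentwise_UNIV
      by (simp add: continuous_on_component continuous_on_id)
    show "(\<lambda>y v. y $ v) \<in> topspace (top_of_set (Geo K)) \<rightarrow>
          {x. (\<forall>v. 0 \<le> x v) \<and> sum x UNIV = 1 \<and> {v. x v \<noteq> 0} \<in> K}"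
      by (auto simp: Geo_def)
  qed
  define hh where "hh = (\<lambda>y v. y $ v) \<circ> (H \<circ> g)"
  have conthh: "continuous_map ?X (geom_real K) hh"
    unfolding hh_def by (rule continuous_map_compose[OF continuous_map_compose[OF contg contH] vn])
  have h0: "hh (0, x) = f x" if "x \<in> topspace (nsphere i)" for x
  proof -
    have "hh (0, x) = (\<lambda>v. H (\<phi> x) $ v)" unfolding hh_def g_def by simp
    also have "H (\<phi> x) = f' (\<phi> x)" using H(3) H0(3) \<phi>S[OF that] by simp
    also have "\<dots> = vec_lambda (f x)" unfolding f'_def using \<psi>\<phi>[OF that] by simp
    finally show ?thesis by simp
  qed
  have h1: "hh (1, x) = (\<lambda>v. H 0 $ v)" for x
    unfolding hh_def g_def by simp
  have "homotopic_with (\<lambda>_. True) (nsphere i) (geom_real K) f (\<lambda>_. (\<lambda>v. H 0 $ v))"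
    by (subst homotopic_with) (use conthh h0 h1 in auto)
  then show ?thesis by blast
qed

theorem mainTheorem10:
  fixes E :: "'a::finite \<Rightarrow> 'a \<Rightarrow> bool" and d k :: nat
  assumes "simple_graph E"
    and "d \<ge> 2"
    and "CARD('a) \<ge> 2 * d + k"
    and "girth E \<ge> enat (2 * d)"
  shows "m_connected (int k - 1) (geom_real (Delta_t d E))"
proof -
  define K where "K = Delta_t d E"
  have dc: "downclosed K" unfolding K_def by (rule Delta_downclosed)
  have small: "\<sigma> \<in> K" if "card \<sigma> \<le> k + 1" for \<sigma>
    unfolding K_def using Delta_small[OF assms that] .
  have top: "topspace (geom_real K) \<noteq> {}"
  proof -
    obtain v0 :: 'a where True by blast
    define x0 where "x0 = (\<lambda>w::'a. if w = v0 then (1::real) else 0)"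
    have "{v. x0 v \<noteq> 0} = {v0}" unfolding x0_def by auto
    then have "{v. x0 v \<noteq> 0} \<in> K" using small[of "{v0}"] by simp
    moreover have "sum x0 UNIV = 1" unfolding x0_def by simp
    moreover have "\<forall>v. 0 \<le> x0 v" unfolding x0_def by simp
    ultimately have "x0 \<in> topspace (geom_real K)" by (simp add: geom_real_def)
    then show ?thesis by blast
  qed
  have sph: "\<exists>c. homotopic_with (\<lambda>_. True) (nsphere i) (geom_real K) f (\<lambda>_. c)"
    if i: "int i \<le> int k - 1" and f: "continuous_map (nsphere i) (geom_real K) f" for i f
  proof (rule sphere_null[OF dc _ _ f])
    show "\<sigma> \<in> K" if "card \<sigma> \<le> i + 2" for \<sigma> using small that i by simp
    show "i + 2 < CARD('a)" using i assms(2,3) by linarith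
  qed
  show ?thesis unfolding m_connected_def K_def[symmetric] using top sph by blast
qed

end
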